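(* Let $N\ge1$ and let $\Omega_P,\Omega_S\subset[0,\pi]$ be disjoint nonempty closed sets, each a finite union of closed intervals of positive length. Let $D(\omega)=1$ on $\Omega_P$ and $D(\omega)=0$ on $\Omega_S$. For $K>0$ let $W_K(\omega)=1$ on $\Omega_P$ and $W_K(\omega)=K$ on $\Omega_S$, and define $$\Delta_{P,res}(K)=\min_{c_0,\dots,c_N\in\mathbb{R}}\ \max_{\omega\in\Omega_P\cup\Omega_S}\Bigl|W_K(\omega)\Bigl(\sum_{n=0}^N c_n\cos(n\omega)-D(\omega)\Bigr)\Bigr|,$$ the minimax weighted error of the optimal even-symmetric (zero-phase) sequence of order $2N$ approximating $D$ with weight $W_K$. Then $\Delta_{P,res}$ is a strictly increasing function of $K$ on $(0,\infty)$: if $0<K_1<K_2$ then $\Delta_{P,res}(K_1)<\Delta_{P,res}(K_2)$. *)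

theory Defs
  imports "HOL-Analysis.Analysis"
begin

definition finite_union_of_intervals :: "real set \<Rightarrow> bool" where
  "finite_union_of_intervals A \<longleftrightarrow>
     (\<exists>I :: (real \<times> real) set. finite I \<and> (\<forall>(a,b)\<in>I. a < b) \<and>
        A = (\<Union>(a,b)\<in>I. {a..b}))"

definition desired :: "real set \<Rightarrow> real \<Rightarrow> real" where
  "desired OmegaP w = (if w \<in> OmegaP then 1 else 0)"

definition weight :: "real set \<Rightarrow> real \<Rightarrow> real \<Rightarrow> real" where
  "weight OmegaP K w = (if w \<in> OmegaP then 1 else K)"

definition cospoly :: "nat \<Rightarrow> (nat \<Rightarrow> real) \<Rightarrow> real \<Rightarrow> real" where
  "cospoly N c w = (\<Sum>n=0..N. c n * cos (real n * w))"

definition max_weighted_error ::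
  "nat \<Rightarrow> real set \<Rightarrow> real set \<Rightarrow> real \<Rightarrow> (nat \<Rightarrow> real) \<Rightarrow> real" where
  "max_weighted_error N OmegaP OmegaS K c =
     (SUP w\<in>OmegaP \<union> OmegaS. \<bar>weight OmegaP K w * (cospoly N c w - desired OmegaP w)\<bar>)"

text \<open>Minimax error Delta_{P,res}(K); only c 0..c N matter.\<close>
definition Delta_Pres :: "nat \<Rightarrow> real set \<Rightarrow> real set \<Rightarrow> real \<Rightarrow> real" where
  "Delta_Pres N OmegaP OmegaS K =
     (INF c\<in>(UNIV :: (nat \<Rightarrow> real) set). max_weighted_error N OmegaP OmegaS K c)"

end

theory Submission
  imports Defs "HOL-Computational_Algebra.Polynomial"
begin

fun cheb :: "nat \<Rightarrow> real poly" where
  "cheb 0 = 1" | "cheb (Suc 0) = [:0,1:]"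
| "cheb (Suc (Suc n)) = [:0,2:] * cheb (Suc n) - cheb n"

lemma cheb_cos: "cos (real n * w) = poly (cheb n) (cos w)"
proof (induction n rule: cheb.induct)
  case (3 n)
  have "cos (real (Suc (Suc n)) * w) = cos ((real (Suc n)) * w + w)"
    by (simp add: algebra_simps)
  moreover have "cos (real n * w) = cos ((real (Suc n)) * w - w)"
    by (simp add: algebra_simps)
  ultimately have "cos (real (Suc (Suc n)) * w) = 2 * cos w * cos (real (Suc n) * w) - cos (real n * w)"
    by (simp add: cos_add cos_diff)
  with 3 show ?case by simp
qed auto

lemma cheb_deg: "degree (cheb n) \<le> n"
proof (induction n rule: cheb.induct)
  case (3 n)
  have "degree ([:0,2:] * cheb (Suc n)) \<le> Suc (Suc n)"
    using degree_mult_le[of "[:0,2::real:]" "cheb (Suc n)"] 3 by simp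
  moreover have "degree (cheb n) \<le> Suc (Suc n)" using 3 by simp
  ultimately show ?case by (simp add: degree_diff_le)
qed auto

lemma cospoly_poly: "\<exists>Q. degree Q \<le> N \<and> (\<forall>w. cospoly N c w = poly Q (cos w))"
proof (intro exI conjI allI)
  show "degree (\<Sum>n=0..N. smult (c n) (cheb n)) \<le> N"
    by (rule degree_sum_le) (auto intro: order.trans[OF degree_smult_le] order.trans[OF cheb_deg])
  fix w show "cospoly N c w = poly (\<Sum>n=0..N. smult (c n) (cheb n)) (cos w)"
    by (simp add: cospoly_def poly_sum cheb_cos)
qed

definition lag :: "real set \<Rightarrow> real \<Rightarrow> real \<Rightarrow> real" where
  "lag U u x = (\<Prod>v\<in>U-{u}. (x - v)/(u - v))"

lemma lagrange:
  fixes Q :: "real poly"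
  assumes U: "finite U" "card U = N+1" and dQ: "degree Q \<le> N"
  shows "poly Q x = (\<Sum>u\<in>U. poly Q u * lag U u x)"
proof -
  define L where "L = (\<Sum>u\<in>U. smult (poly Q u) (\<Prod>v\<in>U-{u}. smult (1/(u-v)) [:-v,1:]))"
  have pL: "poly L y = (\<Sum>u\<in>U. poly Q u * lag U u y)" for y
  proof -
    have f: "1/(u-v) * poly [:-v,1:] y = (y - v)/(u - v)" for u v :: real
      by (simp add: diff_divide_distrib[symmetric])
    show ?thesis by (simp only: L_def poly_sum lag_def poly_smult poly_prod f)
  qed
  have dL: "degree L \<le> N"
    unfolding L_def
  proof (rule degree_sum_le[OF U(1)])
    fix u assume u: "u \<in> U"
    have "degree (\<Prod>v\<in>U-{u}. smult (1/(u-v)) [:-v,1:]) \<le> (\<Sum>v\<in>U-{u}. degree (smult (1/(u-v)) [:-v,1:]))"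
      using degree_prod_sum_le[of "U-{u}" "\<lambda>v. smult (1/(u-v)) [:-v,1:]"] U by (simp only: o_def finite_Diff)
    also have "\<dots> \<le> (\<Sum>v\<in>U-{u}. 1)"
    proof (rule sum_mono)
      fix v show "degree (smult (1/(u-v)) [:-v,1:]) \<le> 1"
        by (rule order.trans[OF degree_smult_le]) simp
    qed
    also have "\<dots> = N" using U u by simp
    finally show "degree (smult (poly Q u) (\<Prod>v\<in>U-{u}. smult (1/(u-v)) [:-v,1:])) \<le> N"
      by (rule order.trans[OF degree_smult_le])
  qed
  have "Q = L"
  proof (rule poly_eqI_degree[of U])
    fix y assume y: "y \<in> U"
    have "(\<Sum>u\<in>U. poly Q u * lag U u y) = poly Q y * lag U y y"
    proof (rule sum.remove[OF U(1) y, THEN trans])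
      have "\<forall>u\<in>U-{y}. poly Q u * lag U u y = 0"
      proof
        fix u assume u: "u \<in> U-{y}"
        have "lag U u y = 0" unfolding lag_def
          by (rule prod_zero) (use y u U(1) in \<open>auto intro!: bexI[of _ y]\<close>)
        then show "poly Q u * lag U u y = 0" by simp
      qed
      then have "(\<Sum>u\<in>U-{y}. poly Q u * lag U u y) = 0" by (intro sum.neutral) blast
      then show "poly Q y * lag U y y + (\<Sum>u\<in>U-{y}. poly Q u * lag U u y) = poly Q y * lag U y y"
        by simp
    qed
    also have "lag U y y = 1" unfolding lag_def by (intro prod.neutral) (auto simp: y)
    finally show "poly Q y = poly L y" by (simp add: pL)
  next
    show "degree Q < card U" using U dQ by simp
  next
    show "degree L < card U" using U dL by simp
  qed
  then have "poly Q x = poly L x" by simp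
  also have "\<dots> = (\<Sum>u\<in>U. poly Q u * lag U u x)" by (rule pL)
  finally show ?thesis .
qed


definition err :: "nat \<Rightarrow> real set \<Rightarrow> real \<Rightarrow> (nat \<Rightarrow> real) \<Rightarrow> real \<Rightarrow> real" where
  "err N P K c w = \<bar>weight P K w * (cospoly N c w - desired P w)\<bar>"

lemma cospoly_bound: "\<bar>cospoly N c w\<bar> \<le> (\<Sum>n=0..N. \<bar>c n\<bar>)"
  unfolding cospoly_def
proof (rule order.trans[OF sum_abs], rule sum_mono)
  fix n show "\<bar>c n * cos (real n * w)\<bar> \<le> \<bar>c n\<bar>"
    by (simp add: abs_mult mult_left_le)
qed

lemma err_bdd: "bdd_above ((err N P K c) ` X)"
proof (rule bdd_aboveI2)
  fix w
  have "\<bar>weight P K w\<bar> \<le> max 1 \<bar>K\<bar>" by (simp add: weight_def)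
  moreover have "\<bar>cospoly N c w - desired P w\<bar> \<le> (\<Sum>n=0..N. \<bar>c n\<bar>) + 1"
    using cospoly_bound[of N c w] by (auto simp: desired_def abs_le_iff)
  ultimately show "err N P K c w \<le> max 1 \<bar>K\<bar> * ((\<Sum>n=0..N. \<bar>c n\<bar>) + 1)"
    unfolding err_def abs_mult by (rule mult_mono) simp_all
qed

lemma mwe_eq: "max_weighted_error N P S K c = (SUP w\<in>P \<union> S. err N P K c w)"
  by (simp add: max_weighted_error_def err_def)

lemma err_le_mwe: "w \<in> P \<union> S \<Longrightarrow> err N P K c w \<le> max_weighted_error N P S K c"
  unfolding mwe_eq by (rule cSUP_upper[OF _ err_bdd])

lemma mwe_le: "P \<union> S \<noteq> {} \<Longrightarrow> (\<And>w. w \<in> P \<union> S \<Longrightarrow> err N P K c w \<le> M) \<Longrightarrow>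
   max_weighted_error N P S K c \<le> M"
  unfolding mwe_eq by (rule cSUP_least)

lemma mwe_nonneg: "P \<union> S \<noteq> {} \<Longrightarrow> 0 \<le> max_weighted_error N P S K c"
proof -
  assume "P \<union> S \<noteq> {}" then obtain w where "w \<in> P \<union> S" by blast
  then have "err N P K c w \<le> max_weighted_error N P S K c" by (rule err_le_mwe)
  moreover have "0 \<le> err N P K c w" by (simp add: err_def)
  ultimately show ?thesis by linarith
qed

lemma Delta_le: "P \<union> S \<noteq> {} \<Longrightarrow> Delta_Pres N P S K \<le> max_weighted_error N P S K c"
  unfolding Delta_Pres_def
  by (rule cINF_lower) (auto intro!: bdd_belowI2 mwe_nonneg)

lemma Delta_ge: "(\<And>c. M \<le> max_weighted_error N P S K c) \<Longrightarrow> M \<le> Delta_Pres N P S K"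
  unfolding Delta_Pres_def by (rule cINF_greatest) auto

theorem mainTheorem2:
  fixes N :: nat and OmegaP OmegaS :: "real set" and K1 K2 :: real
  assumes "N \<ge> 1"
    and "OmegaP \<subseteq> {0..pi}" and "OmegaS \<subseteq> {0..pi}"
    and "OmegaP \<inter> OmegaS = {}"
    and "OmegaP \<noteq> {}" and "OmegaS \<noteq> {}"
    and "closed OmegaP" and "closed OmegaS"
    and "finite_union_of_intervals OmegaP" and "finite_union_of_intervals OmegaS"
    and "0 < K1" and "K1 < K2"
  shows "Delta_Pres N OmegaP OmegaS K1 < Delta_Pres N OmegaP OmegaS K2"
proof -
  note A = assms
  define P where "P = OmegaP"
  define S where "S = OmegaS"
  have PS: "P \<union> S \<noteq> {}" using A by (auto simp: P_def)
  have errP: "err N P K c w = \<bar>cospoly N c w - 1\<bar>" if "w \<in> P" for K c w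
    using that by (simp add: err_def weight_def desired_def)
  have errS: "err N P K c w = \<bar>K\<bar> * \<bar>cospoly N c w\<bar>" if "w \<in> S" for K c w
    using that A(4) by (auto simp: err_def weight_def desired_def P_def S_def abs_mult)
  have K2: "0 < K2" using A by linarith
  obtain x0 where x0: "x0 \<in> P" using A(5) P_def by blast
  obtain I where I: "finite I" "\<forall>(a,b)\<in>I. a < b" "S = (\<Union>(a,b)\<in>I. {a..b})"
    using A(10) unfolding finite_union_of_intervals_def S_def by blast
  obtain a b where ab: "(a,b) \<in> I" using A(6) I(3) S_def by auto
  have "a < b" using ab I(2) by auto
  have "{a..b} \<subseteq> S" unfolding I(3) using ab by blast
  moreover have "infinite {a..b}" using \<open>a < b\<close> by simp
  ultimately have Sinf: "infinite S" by (meson finite_subset)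
  have S0: "S \<subseteq> {0..pi}" using A(3) by (simp add: S_def)
  have "inj_on cos S"
  proof (rule inj_onI)
    fix x y assume xy: "x \<in> S" "y \<in> S" "cos x = cos y"
    have "x \<in> {0..pi}" "y \<in> {0..pi}" using S0 xy(1,2) by blast+
    then show "x = y" using cos_inj_pi[of x y] xy(3) by simp
  qed
  then have "infinite (cos ` S)" using Sinf by (simp add: finite_image_iff)
  then obtain U where U: "finite U" "card U = N+1" "U \<subseteq> cos ` S"
    using infinite_arbitrarily_large by blast
  define C where "C = (\<Sum>u\<in>U. \<bar>lag U u (cos x0)\<bar>)"
  have C0: "0 \<le> C" unfolding C_def by (intro sum_nonneg) auto
  define \<delta> where "\<delta> = 1 / (1 + C / K2)"
  have CK: "0 < 1 + C / K2" using C0 K2 divide_nonneg_pos[of C K2] by linarith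
  have \<delta>0: "0 < \<delta>" unfolding \<delta>_def using CK by simp
  have \<delta>le: "\<delta> \<le> max_weighted_error N P S K2 c" for c
  proof -
    define e where "e = max_weighted_error N P S K2 c"
    obtain Q where Q: "degree Q \<le> N" "\<And>w. cospoly N c w = poly Q (cos w)"
      using cospoly_poly by blast
    have e1: "\<bar>cospoly N c x0 - 1\<bar> \<le> e"
      using err_le_mwe[of x0 P S N K2 c] x0 errP[OF x0] by (simp add: e_def)
    have e2: "\<bar>poly Q u\<bar> \<le> e / K2" if uU: "u \<in> U" for u
    proof -
      obtain y where y: "y \<in> S" "u = cos y" using uU U(3) by blast
      have "K2 * \<bar>cospoly N c y\<bar> \<le> e"
        using err_le_mwe[of y P S N K2 c] y errS[OF y(1)] K2 by (simp add: e_def)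
      then show ?thesis using K2 y Q(2) by (simp add: field_simps)
    qed
    have "\<bar>cospoly N c x0\<bar> = \<bar>\<Sum>u\<in>U. poly Q u * lag U u (cos x0)\<bar>"
      unfolding Q(2) by (subst lagrange[OF U(1,2) Q(1)]) (rule refl)
    also have "\<dots> \<le> (\<Sum>u\<in>U. \<bar>poly Q u\<bar> * \<bar>lag U u (cos x0)\<bar>)"
      by (rule order.trans[OF sum_abs]) (simp add: abs_mult)
    also have "\<dots> \<le> (\<Sum>u\<in>U. e / K2 * \<bar>lag U u (cos x0)\<bar>)"
      by (intro sum_mono mult_right_mono e2) auto
    also have "\<dots> = e / K2 * C" by (simp add: C_def sum_distrib_left)
    finally have "\<bar>cospoly N c x0\<bar> \<le> e / K2 * C" .
    with e1 have "1 \<le> e + e / K2 * C" by linarith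
    then have "1 \<le> e * (1 + C / K2)" by (simp add: field_simps)
    moreover note CK
    ultimately show ?thesis unfolding \<delta>_def e_def[symmetric] by (simp add: field_simps)
  qed
  define D1 where "D1 = Delta_Pres N P S K1"
  define D2 where "D2 = Delta_Pres N P S K2"
  have D2pos: "0 < D2" unfolding D2_def using \<delta>0 Delta_ge[OF \<delta>le] by linarith
  define r where "r = K1 / K2"
  have r: "0 < r" "r < 1" using A K2 by (auto simp: r_def)
  define t where "t = D2 * (1 - r) / (2 * (K1 + D2))"
  define s where "s = 1 - t"
  have t0: "0 < t" unfolding t_def using D2pos r A by simp
  have den: "0 < 2 * (K1 + D2)" using D2pos A by simp
  have "0 < D2 * r" using D2pos r by simp
  then have "D2 * (1 - r) < 2 * (K1 + D2)" using D2pos A by (simp add: algebra_simps)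
  then have t1: "t < 1" unfolding t_def using den by (simp add: pos_divide_less_eq)
  have tK: "t * K1 < D2 * (1 - r)"
  proof -
    have "t * K1 = D2 * (1 - r) * (K1 / (2 * (K1 + D2)))" by (simp add: t_def)
    also have "\<dots> < D2 * (1 - r) * 1"
      using D2pos r A by (intro mult_strict_left_mono) (auto simp: field_simps)
    finally show ?thesis by simp
  qed
  have s0: "0 < s" "s < 1" using t0 t1 by (auto simp: s_def)
  have key: "D1 \<le> max (s * max_weighted_error N P S K2 c) (s * r * max_weighted_error N P S K2 c + t * K1)" for c
  proof -
    define e where "e = max_weighted_error N P S K2 c"
    define c' where "c' = (\<lambda>n. s * c n + t * (if n = 0 then 1 else 0))"
    have cp: "cospoly N c' w = s * cospoly N c w + t" for w
    proof -
      have "cospoly N c' w = (\<Sum>n=0..N. s * (c n * cos (real n * w))) + (\<Sum>n=0..N. t * (if n = 0 then 1 else 0) * cos (real n * w))"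
        unfolding cospoly_def c'_def by (simp only: distrib_right sum.distrib mult.assoc)
      also have "(\<Sum>n=0..N. t * (if n = 0 then 1 else 0) * cos (real n * w)) = (\<Sum>n=0..N. if n = 0 then t else 0)"
        by (intro sum.cong) auto
      also have "\<dots> = t" by simp
      finally show ?thesis by (simp add: cospoly_def sum_distrib_left)
    qed
    have "max_weighted_error N P S K1 c' \<le> max (s * e) (s * r * e + t * K1)"
    proof (rule mwe_le[OF PS])
      fix w assume w: "w \<in> P \<union> S"
      show "err N P K1 c' w \<le> max (s * e) (s * r * e + t * K1)"
      proof (cases "w \<in> P")
        case True
        have "cospoly N c' w - 1 = s * (cospoly N c w - 1)" using cp by (simp add: s_def algebra_simps)
        then have "err N P K1 c' w = s * \<bar>cospoly N c w - 1\<bar>"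
          using errP[OF True] s0 by (simp add: abs_mult)
        also have "\<dots> \<le> s * e"
          using err_le_mwe[of w P S N K2 c] w errP[OF True] s0 by (simp add: e_def)
        finally show ?thesis by simp
      next
        case False
        then have wS: "w \<in> S" using w by blast
        have "err N P K1 c' w = K1 * \<bar>s * cospoly N c w + t\<bar>"
          using errS[OF wS] cp A by simp
        also have "\<dots> \<le> K1 * (s * \<bar>cospoly N c w\<bar> + t)"
          using A s0 t0 by (intro mult_left_mono) (auto simp: abs_mult intro: order.trans[OF abs_triangle_ineq])
        also have "\<dots> = s * r * (K2 * \<bar>cospoly N c w\<bar>) + t * K1"
          using K2 by (simp add: r_def field_simps)
        also have "\<dots> \<le> s * r * e + t * K1"
          using err_le_mwe[of w P S N K2 c] w errS[OF wS] s0 r K2 by (simp add: e_def)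
        finally show ?thesis by simp
      qed
    qed
    then show ?thesis using Delta_le[OF PS, of N K1 c'] by (simp add: D1_def e_def)
  qed
  have "min (D1 / s) ((D1 - t * K1) / (s * r)) \<le> D2"
    unfolding D2_def
  proof (rule Delta_ge)
    fix c
    define e where "e = max_weighted_error N P S K2 c"
    have "D1 \<le> s * e \<or> D1 \<le> s * r * e + t * K1" using key[of c] unfolding e_def by (simp only: le_max_iff_disj)
    then have "D1 / s \<le> e \<or> (D1 - t * K1) / (s * r) \<le> e"
      using s0 r by (auto simp: pos_divide_le_eq mult.commute)
    then show "min (D1 / s) ((D1 - t * K1) / (s * r)) \<le> e" by linarith
  qed
  then have "D1 \<le> s * D2 \<or> D1 \<le> s * r * D2 + t * K1"
    using s0 r by (auto simp: min_def pos_divide_le_eq mult.commute split: if_splits)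
  moreover have "s * D2 < D2" using s0 D2pos by simp
  moreover have "s * r * D2 + t * K1 < D2"
  proof -
    have "s * r * D2 \<le> r * D2" using s0 r D2pos by simp
    then show ?thesis using tK by (simp add: algebra_simps)
  qed
  ultimately show ?thesis by (auto simp: D1_def D2_def P_def S_def)
qed

end
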